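(* Let $q \geq 2$ be an integer. If $w_1 \cdots w_\ell$ is a $q$-Kunz word and $v_i := \min\{q-1, w_i\}$ for each $i$, then $v_1 \cdots v_\ell$ is a $(q-1)$-Kunz word.
   Context: A Kunz word of length $\ell$ is a word $w_1 \cdots w_\ell$ of positive integers satisfying the Kunz conditions: $w_i + w_j \geq w_{i+j}$ for all $i,j \geq 1$ with $i + j \leq \ell$, and $w_i + w_j + 1 \geq w_{i+j-\ell-1}$ for all $i,j \leq \ell$ with $i + j > \ell + 1$. A Kunz word is $q$-Kunz if its maximum entry is at most $q$. *)

theory Defs
  imports Main
begin

definition wd :: "nat list \<Rightarrow> nat \<Rightarrow> nat" where
  "wd w i = w ! (i - 1)"

definition kunz_word :: "nat list \<Rightarrow> bool" where
  "kunz_word w \<longleftrightarrow>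
     (\<forall>i \<in> set w. i \<ge> 1) \<and>
     (\<forall>i j. 1 \<le> i \<and> 1 \<le> j \<and> i + j \<le> length w \<longrightarrow>
            wd w i + wd w j \<ge> wd w (i + j)) \<and>
     (\<forall>i j. 1 \<le> i \<and> 1 \<le> j \<and> i \<le> length w \<and> j \<le> length w \<and> i + j > length w + 1 \<longrightarrow>
            wd w i + wd w j + 1 \<ge> wd w (i + j - length w - 1))"

definition q_kunz_word :: "nat \<Rightarrow> nat list \<Rightarrow> bool" where
  "q_kunz_word q w \<longleftrightarrow> kunz_word w \<and> (\<forall>x \<in> set w. x \<le> q)"

end

theory Submission
  imports Defs
begin

lemma wd_map: "1 \<le> i \<Longrightarrow> i \<le> length w \<Longrightarrow> wd (map f w) i = f (wd w i)"
  unfolding wd_def by simp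

lemma wd_pos: "kunz_word w \<Longrightarrow> 1 \<le> i \<Longrightarrow> i \<le> length w \<Longrightarrow> wd w i \<ge> 1"
  unfolding kunz_word_def wd_def
  by (metis One_nat_def Suc_le_eq diff_less less_le_trans nth_mem zero_less_one)

theorem lemma3p8:
  fixes q :: nat and w :: "nat list"
  assumes "q \<ge> 2" and "q_kunz_word q w"
  shows "q_kunz_word (q - 1) (map (\<lambda>x. min (q - 1) x) w)"
proof -
  let ?f = "\<lambda>x. min (q - 1) x"
  let ?v = "map ?f w"
  have K: "kunz_word w" and Q: "\<forall>x\<in>set w. x \<le> q" using assms(2) unfolding q_kunz_word_def by auto
  have A: "\<forall>i\<in>set w. i \<ge> 1" using K unfolding kunz_word_def by auto
  have B: "\<And>i j. 1 \<le> i \<Longrightarrow> 1 \<le> j \<Longrightarrow> i + j \<le> length w \<Longrightarrow> wd w i + wd w j \<ge> wd w (i + j)"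
    using K unfolding kunz_word_def by auto
  have C: "\<And>i j. 1 \<le> i \<Longrightarrow> 1 \<le> j \<Longrightarrow> i \<le> length w \<Longrightarrow> j \<le> length w \<Longrightarrow> i + j > length w + 1 \<Longrightarrow>
            wd w i + wd w j + 1 \<ge> wd w (i + j - length w - 1)"
    using K unfolding kunz_word_def by auto
  have "kunz_word ?v"
    unfolding kunz_word_def
  proof (intro conjI allI impI)
    show "\<forall>i\<in>set ?v. 1 \<le> i" using A assms(1) by auto
  next
    fix i j assume h: "1 \<le> i \<and> 1 \<le> j \<and> i + j \<le> length ?v"
    have "wd w i \<ge> 1" "wd w j \<ge> 1" using h wd_pos[OF K] by auto
    moreover have "wd w i + wd w j \<ge> wd w (i + j)" using h B by auto
    ultimately show "wd ?v i + wd ?v j \<ge> wd ?v (i + j)"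
      using h wd_map[of i w ?f] wd_map[of j w ?f] wd_map[of "i+j" w ?f] by (auto simp: min_def)
  next
    fix i j assume h: "1 \<le> i \<and> 1 \<le> j \<and> i \<le> length ?v \<and> j \<le> length ?v \<and> i + j > length ?v + 1"
    have "wd w i \<ge> 1" "wd w j \<ge> 1" using h wd_pos[OF K] by auto
    moreover have "wd w i + wd w j + 1 \<ge> wd w (i + j - length w - 1)" using h C by auto
    moreover have "1 \<le> i + j - length w - 1" "i + j - length w - 1 \<le> length w" using h by auto
    ultimately show "wd ?v i + wd ?v j + 1 \<ge> wd ?v (i + j - length ?v - 1)"
      using h wd_map[of i w ?f] wd_map[of j w ?f] wd_map[of "i + j - length w - 1" w ?f]
      by (simp add: min_def)
  qed
  moreover have "\<forall>x\<in>set ?v. x \<le> q - 1" by auto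
  ultimately show ?thesis unfolding q_kunz_word_def by auto
qed

end
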